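(* Let $r_1,\dots,r_n\in\mathbb R$ and $r=\mathrm{diag}(r_1,\dots,r_n)$. For each $1\le i,k\le n$, $q_{i,k}$ interlaces $\sigma_k(r+tI)$: if $u_1\ge u_2\ge\cdots\ge u_k$ are the roots of $\sigma_k(r+tI)$ and $v_1\ge\cdots\ge v_{k-1}$ are the roots of $q_{i,k}$, then $u_k\le v_{k-1}\le u_{k-1}\le\cdots\le v_1\le u_1$.
   Context: $\sigma_k(r+tI)=\sum_{i_1<\cdots<i_k}(t+r_{i_1})\cdots(t+r_{i_k})$, and $q_{i,k}(t)=\sum_{j=0}^{k-1}(-1)^j\sigma_{k-1-j}(r+tI)(t+r_i)^j$ with $\sigma_0=1$; both are real-rooted. *)

theory Defs
  imports "HOL-Computational_Algebra.Polynomial" "HOL-Library.Multiset"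
begin

text \<open>sigma_k(r + tI) as a polynomial in t, where r = diag(r_1,...,r_n):
  the k-th elementary symmetric polynomial of t + r_1, ..., t + r_n.\<close>
definition sigma_poly :: "nat \<Rightarrow> (nat \<Rightarrow> real) \<Rightarrow> nat \<Rightarrow> real poly" where
  "sigma_poly n r k = (\<Sum>S \<in> {S. S \<subseteq> {1..n} \<and> card S = k}. \<Prod>i\<in>S. [:r i, 1:])"

definition q_poly :: "nat \<Rightarrow> (nat \<Rightarrow> real) \<Rightarrow> nat \<Rightarrow> nat \<Rightarrow> real poly" where
  "q_poly n r i k = (\<Sum>j<k. smult ((-1) ^ j) (sigma_poly n r (k - 1 - j) * [:r i, 1:] ^ j))"

definition is_root_list :: "real poly \<Rightarrow> real list \<Rightarrow> bool" where
  "is_root_list p xs \<longleftrightarrow> p \<noteq> 0 \<and> (\<forall>x. count (mset xs) x = order x p)"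

end

theory Submission
  imports Defs
begin

declare mult_pCons_left[simp del]

definition lp :: "real multiset \<Rightarrow> real poly" where
  "lp M = (\<Prod>x\<in>#M. [:-x, 1:])"

definition cnt :: "real multiset \<Rightarrow> real \<Rightarrow> nat" where
  "cnt M a = size (filter_mset (\<lambda>x. a < x) M)"

lemma lp_empty[simp]: "lp {#} = 1" by (simp add: lp_def)
lemma lp_add_mset[simp]: "lp (add_mset x M) = [:-x,1:] * lp M" by (simp add: lp_def)
lemma lp_union: "lp (M + N) = lp M * lp N" by (simp add: lp_def)

lemma lp_nz[simp]: "lp M \<noteq> 0"
  by (induction M) (auto)

lemma degree_lp[simp]: "degree (lp M) = size M"
  by (induction M) (auto simp: degree_mult_eq)

lemma lead_lp[simp]: "lead_coeff (lp M) = 1"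
  by (induction M) (auto simp: lead_coeff_mult)

lemma poly_lp: "poly (lp M) a = (\<Prod>x\<in>#M. a - x)"
  by (induction M) (auto simp: algebra_simps)

lemma order_lin: "order y [:-x,1:] = (if y = x then 1 else (0::nat))"
proof (cases "y = x")
  case True
  then show ?thesis using order_power_n_n[of x 1] by simp
next
  case False
  then have "poly [:-x,1:] y \<noteq> 0" by simp
  then show ?thesis using False by (simp add: order_0I)
qed

lemma order_lp: "order y (lp M) = count M y"
proof (induction M)
  case empty
  then show ?case by simp
next
  case (add x M)
  have "order y (lp (add_mset x M)) = order y [:-x,1:] + order y (lp M)"
    by (simp add: order_mult)
  then show ?case using add by (simp add: order_lin)
qed

lemma order_slp: "C \<noteq> 0 \<Longrightarrow> order y (smult C (lp M)) = count M y"
  by (simp add: order_smult order_lp)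

lemma dvd_lp:
  fixes q :: "real poly"
  assumes "q \<noteq> 0" "\<And>x. count M x \<le> order x q"
  shows "lp M dvd q"
  using assms
proof (induction M arbitrary: q)
  case empty
  then show ?case by simp
next
  case (add x M)
  have "order x q \<ge> 1" using add.prems(2)[of x] by simp
  then have "poly q x = 0" using add.prems(1) order_root by fastforce
  then obtain q1 where q1: "q = [:-x,1:] * q1"
    by (metis dvdE dvd_iff_poly_eq_0 minus_minus)
  have q1nz: "q1 \<noteq> 0" using add.prems(1) q1 by auto
  have "\<And>y. count M y \<le> order y q1"
  proof -
    fix y
    have "order y q = order y [:-x,1:] + order y q1"
      using q1 add.prems(1) by (simp add: order_mult)
    then show "count M y \<le> order y q1"
      using add.prems(2)[of y] by (auto simp: order_lin split: if_splits)
  qed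
  then have "lp M dvd q1" using add.IH q1nz by blast
  then show ?case using q1 by simp
qed

lemma sign_lp:
  assumes "a \<notin># M"
  shows "(-1) ^ (cnt M a) * poly (lp M) a > 0"
  using assms
proof (induction M)
  case empty
  then show ?case by (simp add: cnt_def)
next
  case (add x M)
  have ih: "(-1) ^ (cnt M a) * poly (lp M) a > 0" using add by auto
  have ax: "a \<noteq> x" using add.prems by auto
  show ?case
  proof (cases "a < x")
    case True
    then have "cnt (add_mset x M) a = Suc (cnt M a)" by (simp add: cnt_def)
    then have "(-1) ^ (cnt (add_mset x M) a) * poly (lp (add_mset x M)) a
       = ((-1) ^ (cnt M a) * poly (lp M) a) * (x - a)" by (simp add: algebra_simps)
    moreover have "x - a > 0" using True by simp
    ultimately show ?thesis using ih by (metis mult_pos_pos)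
  next
    case False
    then have "cnt (add_mset x M) a = cnt M a" by (simp add: cnt_def)
    then have "(-1) ^ (cnt (add_mset x M) a) * poly (lp (add_mset x M)) a
       = ((-1) ^ (cnt M a) * poly (lp M) a) * (a - x)" by (simp add: algebra_simps)
    moreover have "a - x > 0" using False ax by simp
    ultimately show ?thesis using ih by (metis mult_pos_pos)
  qed
qed

lemma deriv_split:
  fixes C :: real
  assumes C: "C \<noteq> 0" and sz: "size M \<ge> 1"
  shows "\<exists>M'. pderiv (smult C (lp M)) = smult (C * of_nat (size M)) (lp M') \<and>
     size M' = size M - 1 \<and> (\<forall>a. cnt M' a \<le> cnt M a \<and> cnt M a \<le> cnt M' a + 1)"
proof -
  define p where "p = smult C (lp M)"
  define Z where "Z = set_mset M"
  have finZ: "finite Z" by (simp add: Z_def)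
  have Mne: "M \<noteq> {#}" using sz by (cases M) auto
  then have Zne: "Z \<noteq> {}" unfolding Z_def by simp
  have pnz: "p \<noteq> 0" using C by (simp add: p_def)
  have degp: "degree p = size M" using C by (simp add: p_def)
  have rootp: "poly p w = 0" if "w \<in> Z" for w
  proof -
    have "order w p = count M w" using C by (simp add: p_def order_slp)
    moreover have "count M w > 0" using that by (simp add: Z_def)
    ultimately have "order w p \<noteq> 0" by simp
    then show ?thesis by (simp add: order_root)
  qed
  define pr where "pr z = Max {w\<in>Z. w < z}" for z
  define Y where "Y = Z - {Min Z}"
  have gap: "pr z \<in> Z \<and> pr z < z \<and> (\<forall>w\<in>Z. w < z \<longrightarrow> w \<le> pr z)" if "z \<in> Y" for z
  proof -
    have zZ: "z \<in> Z" and zm: "z \<noteq> Min Z" using that by (auto simp: Y_def)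
    have "Min Z \<le> z" using zZ finZ by simp
    then have "Min Z < z" using zm by simp
    then have ne: "{w\<in>Z. w < z} \<noteq> {}" using Min_in[OF finZ Zne] by blast
    have fin: "finite {w\<in>Z. w < z}" using finZ by simp
    show ?thesis using Max_in[OF fin ne] Max_ge[OF fin] unfolding pr_def by auto
  qed
  have rolle: "\<exists>y. pr z < y \<and> y < z \<and> poly (pderiv p) y = 0" if zY: "z \<in> Y" for z
  proof -
    have zZ: "z \<in> Z" using zY by (simp add: Y_def)
    obtain y where y: "pr z < y" "y < z" "poly p z - poly p (pr z) = (z - pr z) * poly (pderiv p) y"
      using poly_MVT[of "pr z" z p] gap[OF zY] by blast
    then have "(z - pr z) * poly (pderiv p) y = 0" using rootp zZ gap[OF zY] by simp
    then show ?thesis using y gap[OF zY] by auto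
  qed
  define yf where "yf z = (SOME y. pr z < y \<and> y < z \<and> poly (pderiv p) y = 0)" for z
  have yf: "pr z < yf z \<and> yf z < z \<and> poly (pderiv p) (yf z) = 0" if "z \<in> Y" for z
    unfolding yf_def using someI_ex[OF rolle[OF that]] .
  have yfZ: "yf z \<notin> Z" if "z \<in> Y" for z
  proof
    assume "yf z \<in> Z"
    then have "yf z \<le> pr z" using gap[OF that] yf[OF that] by blast
    then show False using yf[OF that] by simp
  qed
  have inj: "inj_on yf Y"
  proof (rule inj_onI)
    fix z1 z2 assume z: "z1 \<in> Y" "z2 \<in> Y" "yf z1 = yf z2"
    show "z1 = z2"
    proof (rule ccontr)
      assume "z1 \<noteq> z2"
      then consider "z1 < z2" | "z2 < z1" by linarith
      then show False
      proof cases
        case 1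
        then have "z1 \<le> pr z2" using gap[OF z(2)] z(1) by (auto simp: Y_def)
        then show False using yf[OF z(1)] yf[OF z(2)] z(3) by linarith
      next
        case 2
        then have "z2 \<le> pr z1" using gap[OF z(1)] z(2) by (auto simp: Y_def)
        then show False using yf[OF z(1)] yf[OF z(2)] z(3) by linarith
      qed
    qed
  qed
  have finY: "finite Y" using finZ by (simp add: Y_def)
  define M' where "M' = (M - mset_set Z) + mset_set (yf ` Y)"
  have sub: "mset_set Z \<subseteq># M" unfolding Z_def by (rule mset_set_set_mset_msubset)
  have cZM: "card Z \<le> size M" using size_mset_mono[OF sub] finZ by simp
  have cardY: "card Y = card Z - 1" using finZ Zne Min_in[OF finZ Zne] by (simp add: Y_def)
  have cardyY: "card (yf ` Y) = card Y" using inj by (simp add: card_image)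
  have sizeM': "size M' = size M - 1"
  proof -
    have "card Z \<ge> 1" using finZ Zne by (simp add: Suc_le_eq card_gt_0_iff)
    moreover have "size M' = (size M - card Z) + card (yf ` Y)"
      unfolding M'_def using size_Diff_submset[OF sub] finZ by simp
    ultimately show ?thesis using cZM cardY cardyY by simp
  qed
  have ppnz: "pderiv p \<noteq> 0" using degp sz Mne by (simp add: pderiv_eq_0_iff)
  have ord: "count M' x \<le> order x (pderiv p)" for x
  proof (cases "x \<in> Z")
    case True
    have "x \<notin> yf ` Y" using yfZ True by blast
    then have cM': "count M' x = count M x - 1"
      using True finZ finY by (simp add: M'_def)
    have "order x p = Suc (order x (pderiv p))" using order_pderiv[OF pnz rootp[OF True]] .
    moreover have "order x p = count M x" using C by (simp add: p_def order_slp)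
    ultimately show ?thesis using cM' by simp
  next
    case False
    then have cM: "count M x = 0" by (simp add: Z_def not_in_iff)
    show ?thesis
    proof (cases "x \<in> yf ` Y")
      case True
      then obtain z where z: "z \<in> Y" "x = yf z" by blast
      have "poly (pderiv p) x = 0" using yf[OF z(1)] z(2) by simp
      then have "order x (pderiv p) \<ge> 1" using ppnz order_root by (metis less_one not_less)
      moreover have "count M' x = 1" using True False cM finZ finY by (simp add: M'_def)
      ultimately show ?thesis by simp
    next
      case F2: False
      have "count M' x = 0" using F2 False cM finZ finY by (simp add: M'_def)
      then show ?thesis by simp
    qed
  qed
  have "lp M' dvd pderiv p" using dvd_lp[OF ppnz ord] .
  then obtain r where r: "pderiv p = lp M' * r" by (elim dvdE)
  have rnz: "r \<noteq> 0" using r ppnz by auto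
  have "degree (pderiv p) = size M - 1" using degp by (simp add: degree_pderiv)
  moreover have "degree (pderiv p) = size M' + degree r" using r rnz by (simp add: degree_mult_eq)
  ultimately have dr: "degree r = 0" using sizeM' by simp
  then have r0: "r = [:coeff r 0:]" using degree_0_id by metis
  have l1: "coeff (lp M) (size M) = 1" using lead_lp[of M] by simp
  have l2: "coeff (lp M') (size M') = 1" using lead_lp[of M'] by simp
  have "coeff (pderiv p) (size M - 1) = of_nat (size M) * C"
    using sz l1 by (simp add: coeff_pderiv p_def)
  moreover have pe: "pderiv p = smult (coeff r 0) (lp M')"
    using r r0 by (metis mult.commute mult.right_neutral mult_smult_left smult_one)
  moreover have "coeff (pderiv p) (size M - 1) = coeff r 0"
    using pe l2 sizeM' by simp
  ultimately have eq: "pderiv p = smult (C * of_nat (size M)) (lp M')" by (simp add: mult.commute)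
  have cnts: "cnt M' a \<le> cnt M a \<and> cnt M a \<le> cnt M' a + 1" for a
  proof -
    define T where "T = {z\<in>Z. a < z}"
    have finT: "finite T" using finZ by (simp add: T_def)
    have M_dec: "(M - mset_set Z) + mset_set Z = M" using sub by (rule subset_mset.diff_add)
    have "cnt ((M - mset_set Z) + mset_set Z) a = cnt (M - mset_set Z) a + card T"
      unfolding cnt_def T_def using finZ by simp
    then have c1: "cnt M a = cnt (M - mset_set Z) a + card T" unfolding M_dec .
    have c2: "cnt M' a = cnt (M - mset_set Z) a + card {y\<in>yf ` Y. a < y}"
      unfolding cnt_def M'_def using finY by simp
    have "{y\<in>yf ` Y. a < y} = yf ` {z\<in>Y. a < yf z}" by blast
    moreover have "inj_on yf {z\<in>Y. a < yf z}" using inj by (rule inj_on_subset) blast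
    ultimately have c3: "card {y\<in>yf ` Y. a < y} = card {z\<in>Y. a < yf z}" by (simp add: card_image)
    have s1: "{z\<in>Y. a < yf z} \<subseteq> T"
    proof
      fix z assume "z \<in> {z\<in>Y. a < yf z}"
      then have zY: "z \<in> Y" and az: "a < yf z" by auto
      have "yf z < z" using yf[OF zY] by simp
      then show "z \<in> T" using zY az unfolding T_def Y_def by auto
    qed
    then have le1: "card {z\<in>Y. a < yf z} \<le> card T" using finT card_mono by blast
    have le2: "card T \<le> card {z\<in>Y. a < yf z} + 1"
    proof (cases "T = {}")
      case True then show ?thesis by simp
    next
      case False
      have mT: "Min T \<in> T" using Min_in[OF finT False] .
      have "T - {Min T} \<subseteq> {z\<in>Y. a < yf z}"
      proof
        fix z assume z: "z \<in> T - {Min T}"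
        have zT: "z \<in> T" using z by simp
        have "Min T \<le> z" using Min_le[OF finT zT] .
        then have lt: "Min T < z" using z by auto
        have "Min Z \<le> Min T" using mT finZ by (simp add: T_def)
        then have zY: "z \<in> Y" using lt zT by (auto simp: Y_def T_def)
        have "Min T \<le> pr z" using gap[OF zY] mT lt by (auto simp: T_def)
        moreover have "a < Min T" using mT by (simp add: T_def)
        ultimately show "z \<in> {z\<in>Y. a < yf z}" using yf[OF zY] zY by auto
      qed
      then have "card (T - {Min T}) \<le> card {z\<in>Y. a < yf z}"
        by (intro card_mono) (auto simp: finY)
      then show ?thesis using mT finT by (simp add: card_Diff_singleton)
    qed
    show ?thesis using c1 c2 c3 le1 le2 by simp
  qed
  show ?thesis using eq sizeM' cnts unfolding p_def by blast
qed

lemma not_in_lp: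
  assumes "poly (lp M) a \<noteq> 0" shows "a \<notin># M"
proof
  assume "a \<in># M"
  then have "order a (lp M) \<noteq> 0" by (simp add: order_lp)
  then show False using assms by (simp add: order_root)
qed

lemma cf:
  fixes C :: real
  assumes C: "C \<noteq> 0" and sz: "size M \<ge> 1"
    and d: "pderiv (smult C (lp M)) = smult (C * of_nat (size M)) (lp M')"
    and il: "cnt M' a \<le> cnt M a" "cnt M a \<le> cnt M' a + 1"
    and pa: "poly (smult C (lp M)) a \<noteq> 0" and pda: "poly (pderiv (smult C (lp M))) a \<noteq> 0"
  shows "(poly (pderiv (smult C (lp M))) a * poly (smult C (lp M)) a < 0 \<longrightarrow> cnt M a = cnt M' a + 1)
       \<and> (poly (pderiv (smult C (lp M))) a * poly (smult C (lp M)) a > 0 \<longrightarrow> cnt M a = cnt M' a)"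
proof -
  define P where "P = poly (lp M) a"
  define P' where "P' = poly (lp M') a"
  have P0: "P \<noteq> 0" using pa by (simp add: P_def)
  have P'0: "P' \<noteq> 0" using pda d by (simp add: P'_def)
  have s1: "(-1) ^ cnt M a * P > 0" using sign_lp[OF not_in_lp] P0 unfolding P_def by blast
  have s2: "(-1) ^ cnt M' a * P' > 0" using sign_lp[OF not_in_lp] P'0 unfolding P'_def by blast
  define K where "K = C * (C * of_nat (size M))"
  have CC: "C * C > 0" using C by (metis not_real_square_gt_zero)
  have "real (size M) > 0" using sz by simp
  then have K: "K > 0" using CC unfolding K_def by (metis mult.assoc mult_pos_pos)
  have prod: "poly (pderiv (smult C (lp M))) a * poly (smult C (lp M)) a = K * (P * P')"
    unfolding d K_def P_def P'_def by simp
  have prodsign: "((-1) ^ cnt M a * P) * ((-1) ^ cnt M' a * P') > 0" using s1 s2 by simp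
  consider "cnt M a = cnt M' a" | "cnt M a = cnt M' a + 1" using il by linarith
  then show ?thesis
  proof cases
    case 1
    have u: "(-1::real)^cnt M' a * (-1)^cnt M' a = 1" by (simp add: power_mult_distrib[symmetric])
    have "((-1) ^ cnt M a * P) * ((-1) ^ cnt M' a * P') = ((-1::real)^cnt M' a * (-1)^cnt M' a) * (P * P')"
      unfolding 1 by (simp only: mult_ac)
    then have e: "((-1) ^ cnt M a * P) * ((-1) ^ cnt M' a * P') = P * P'" using u by simp
    have "P * P' > 0" using prodsign unfolding e .
    then have "K * (P * P') > 0" using K by simp
    then show ?thesis using prod 1 by simp
  next
    case 2
    have u: "(-1::real)^cnt M' a * (-1)^cnt M' a = 1" by (simp add: power_mult_distrib[symmetric])
    have "((-1) ^ cnt M a * P) * ((-1) ^ cnt M' a * P') = -((-1::real)^cnt M' a * (-1)^cnt M' a) * (P * P')"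
      using 2 by (simp add: algebra_simps)
    then have "((-1) ^ cnt M a * P) * ((-1) ^ cnt M' a * P') = - (P * P')" using u by simp
    then have "P * P' < 0" using prodsign by simp
    then have "K * (P * P') < 0" using K by (simp add: mult_pos_neg)
    then show ?thesis using prod 2 by simp
  qed
qed

definition sigA :: "nat set \<Rightarrow> (nat \<Rightarrow> real) \<Rightarrow> nat \<Rightarrow> real poly" where
  "sigA A r k = (\<Sum>S \<in> {S. S \<subseteq> A \<and> card S = k}. \<Prod>i\<in>S. [:r i, 1:])"

lemma sigma_sigA: "sigma_poly n r k = sigA {1..n} r k"
  by (simp add: sigma_poly_def sigA_def)

lemma sigA_0: "finite A \<Longrightarrow> sigA A r 0 = 1"
proof -
  assume "finite A"
  have "S = {}" if "S \<subseteq> A" "card S = 0" for S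
    using that \<open>finite A\<close> finite_subset card_0_eq by blast
  then have "{S. S \<subseteq> A \<and> card S = 0} = {{}}" by auto
  then show ?thesis by (simp add: sigA_def)
qed

lemma sigA_big: "finite A \<Longrightarrow> card A < k \<Longrightarrow> sigA A r k = 0"
proof -
  assume "finite A" "card A < k"
  have "False" if "S \<subseteq> A" "card S = k" for S
    using that card_mono[OF \<open>finite A\<close>, of S] \<open>card A < k\<close> by simp
  then have e: "{S. S \<subseteq> A \<and> card S = k} = {}" by auto
  show ?thesis unfolding sigA_def e by (rule sum.empty)
qed

lemma sigA_card: "finite A \<Longrightarrow> sigA A r (card A) = (\<Prod>i\<in>A. [:r i, 1:])"
proof -
  assume f: "finite A"
  then have "{S. S \<subseteq> A \<and> card S = card A} = {A}" using card_subset_eq by blast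
  then show ?thesis by (simp add: sigA_def)
qed

lemma sigA_insert:
  assumes f: "finite A" and a: "a \<notin> A"
  shows "sigA (insert a A) r (Suc k) = sigA A r (Suc k) + [:r a, 1:] * sigA A r k"
proof -
  define X where "X = {S. S \<subseteq> A \<and> card S = Suc k}"
  define Y where "Y = {S. S \<subseteq> A \<and> card S = k}"
  have eq: "{S. S \<subseteq> insert a A \<and> card S = Suc k} = X \<union> insert a ` Y"
  proof
    show "{S. S \<subseteq> insert a A \<and> card S = Suc k} \<subseteq> X \<union> insert a ` Y"
    proof
      fix S assume S: "S \<in> {S. S \<subseteq> insert a A \<and> card S = Suc k}"
      then have fS: "finite S" using f finite_subset by (metis (no_types) finite_insert mem_Collect_eq)
      show "S \<in> X \<union> insert a ` Y"
      proof (cases "a \<in> S")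
        case True
        have "S - {a} \<in> Y" using S True fS unfolding Y_def by auto
        moreover have "S = insert a (S - {a})" using True by auto
        ultimately show ?thesis by blast
      next
        case False
        then show ?thesis using S unfolding X_def by auto
      qed
    qed
  next
    show "X \<union> insert a ` Y \<subseteq> {S. S \<subseteq> insert a A \<and> card S = Suc k}"
    proof
      fix S assume "S \<in> X \<union> insert a ` Y"
      then show "S \<in> {S. S \<subseteq> insert a A \<and> card S = Suc k}"
      proof
        assume "S \<in> X" then show ?thesis unfolding X_def by auto
      next
        assume "S \<in> insert a ` Y"
        then obtain T where T: "T \<in> Y" "S = insert a T" by blast
        have "finite T" "a \<notin> T" using T f a unfolding Y_def by (auto intro: finite_subset)
        then show ?thesis using T unfolding Y_def by auto
      qed
    qed
  qed
  have fX: "finite X" using f unfolding X_def by simp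
  have fY: "finite Y" using f unfolding Y_def by simp
  have disj: "X \<inter> insert a ` Y = {}" using a unfolding X_def by auto
  have inj: "inj_on (insert a) Y"
  proof (rule inj_onI)
    fix S T assume ST: "S \<in> Y" "T \<in> Y" "insert a S = insert a T"
    then have "a \<notin> S" "a \<notin> T" using a unfolding Y_def by auto
    then show "S = T" using ST(3) by (metis Diff_insert_absorb)
  qed
  have "sigA (insert a A) r (Suc k) = (\<Sum>S\<in>X. \<Prod>i\<in>S. [:r i, 1:]) + (\<Sum>S\<in>insert a ` Y. \<Prod>i\<in>S. [:r i, 1:])"
    unfolding sigA_def eq using fX fY disj by (simp add: sum.union_disjoint)
  also have "(\<Sum>S\<in>insert a ` Y. \<Prod>i\<in>S. [:r i, 1:]) = (\<Sum>S\<in>Y. \<Prod>i\<in>insert a S. [:r i, 1:])"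
    using inj by (simp add: sum.reindex)
  also have "\<dots> = (\<Sum>S\<in>Y. [:r a, 1:] * (\<Prod>i\<in>S. [:r i, 1:]))"
  proof (rule sum.cong)
    fix S assume "S \<in> Y"
    then have "finite S" "a \<notin> S" using f a unfolding Y_def by (auto intro: finite_subset)
    then show "(\<Prod>i\<in>insert a S. [:r i, 1:]) = [:r a, 1:] * (\<Prod>i\<in>S. [:r i, 1:])" by simp
  qed simp
  also have "\<dots> = [:r a, 1:] * sigA A r k" unfolding sigA_def Y_def by (simp add: sum_distrib_left)
  finally show ?thesis unfolding sigA_def X_def by simp
qed

lemma pderiv_sigA:
  assumes "finite A"
  shows "pderiv (sigA A r (Suc k)) = smult (of_nat (card A - k)) (sigA A r k)"
  using assms
proof (induction A arbitrary: k rule: finite_induct)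
  case empty
  then show ?case by (simp add: sigA_big)
next
  case (insert a A)
  note ins = sigA_insert[OF insert.hyps(1,2)]
  show ?case
  proof (cases k)
    case 0
    have ih0: "pderiv (sigA A r (Suc 0)) = smult (of_nat (card A)) 1"
      using insert.IH[of 0] insert.hyps(1) by (simp add: sigA_0)
    show ?thesis using insert 0 ih0 by (simp add: ins sigA_0 pderiv_add pderiv_mult pderiv_pCons algebra_simps)
  next
    case (Suc j)
    have ih1: "pderiv (sigA A r (Suc k)) = smult (of_nat (card A - k)) (sigA A r k)" using insert.IH .
    have ih2: "pderiv (sigA A r k) = smult (of_nat (card A - j)) (sigA A r j)" using insert.IH Suc by simp
    have "pderiv (sigA (insert a A) r (Suc k)) =
        smult (of_nat (card A - k)) (sigA A r k) + sigA A r k + [:r a, 1:] * smult (of_nat (card A - j)) (sigA A r j)"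
      by (simp add: ins pderiv_add pderiv_mult ih1 ih2 pderiv_pCons)
    also have "\<dots> = smult (of_nat (card (insert a A) - k)) (sigA (insert a A) r k)"
    proof (cases "k \<le> card A")
      case True
      have e: "real (card A - k) + 1 = real (card A - j)" using True Suc by (simp add: of_nat_diff)
      have "smult (of_nat (card A - k)) (sigA A r k) + sigA A r k = smult (real (card A - k) + 1) (sigA A r k)"
        by (simp add: smult_add_left)
      also have "\<dots> = smult (real (card A - j)) (sigA A r k)" using e by simp
      finally show ?thesis using insert.hyps Suc
        by (simp add: sigA_insert smult_add_right algebra_simps)
    next
      case False
      then have z: "sigA A r k = 0" using insert.hyps(1) by (simp add: sigA_big)
      have "card A - j = 0" using False Suc by simp
      moreover have "card (insert a A) - k = 0" using False Suc insert.hyps by simp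
      ultimately show ?thesis using z Suc insert.hyps by (simp add: sigA_insert)
    qed
    finally show ?thesis .
  qed
qed

lemma sigA_remove:
  assumes "finite A" "i \<in> A"
  shows "sigA A r (Suc k) = sigA (A - {i}) r (Suc k) + [:r i, 1:] * sigA (A - {i}) r k"
proof -
  have "A = insert i (A - {i})" using assms by auto
  then show ?thesis using sigA_insert[of "A - {i}" i r k] assms by (metis finite_Diff Diff_iff singletonI)
qed

lemma q_eq:
  assumes "finite A" "i \<in> A"
  shows "(\<Sum>j<Suc k. smult ((-1) ^ j) (sigA A r (Suc k - 1 - j) * [:r i, 1:] ^ j)) = sigA (A - {i}) r k"
proof (induction k)
  case 0
  then show ?case using assms by (simp add: sigA_0)
next
  case (Suc k)
  have "(\<Sum>j<Suc (Suc k). smult ((-1) ^ j) (sigA A r (Suc (Suc k) - 1 - j) * [:r i, 1:] ^ j))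
      = sigA A r (Suc k) + (\<Sum>j<Suc k. smult ((-1) ^ Suc j) (sigA A r (Suc (Suc k) - 1 - Suc j) * [:r i, 1:] ^ Suc j))"
    by (subst sum.lessThan_Suc_shift) simp
  also have "(\<Sum>j<Suc k. smult ((-1) ^ Suc j) (sigA A r (Suc (Suc k) - 1 - Suc j) * [:r i, 1:] ^ Suc j))
      = - ([:r i, 1:] * (\<Sum>j<Suc k. smult ((-1) ^ j) (sigA A r (Suc k - 1 - j) * [:r i, 1:] ^ j)))"
    unfolding sum_distrib_left sum_negf[symmetric]
  proof (rule sum.cong)
    fix j assume "j \<in> {..<Suc k}"
    have "Suc (Suc k) - 1 - Suc j = Suc k - 1 - j" by simp
    then show "smult ((-1) ^ Suc j) (sigA A r (Suc (Suc k) - 1 - Suc j) * [:r i, 1:] ^ Suc j)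
      = - ([:r i, 1:] * smult ((-1) ^ j) (sigA A r (Suc k - 1 - j) * [:r i, 1:] ^ j))"
      by (simp only:) (simp add: algebra_simps del: minus_pCons)
  qed simp
  also have "\<dots> = - ([:r i, 1:] * sigA (A - {i}) r k)" using Suc by simp
  also have "sigA A r (Suc k) + - ([:r i, 1:] * sigA (A - {i}) r k) = sigA (A - {i}) r (Suc k)"
    using sigA_remove[OF assms, of r k] by simp
  finally show ?case .
qed

lemma prod_lin_lp: "finite A \<Longrightarrow> (\<Prod>i\<in>A. [:r i, 1:]) = lp (image_mset (\<lambda>i. - r i) (mset_set A))"
  by (induction A rule: finite_induct) (auto simp: lp_def)

lemma sigA_split:
  assumes "finite A"
  shows "k \<le> card A \<Longrightarrow> \<exists>C M. C \<noteq> 0 \<and> size M = k \<and> sigA A r k = smult C (lp M)"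
proof (induction "card A - k" arbitrary: k)
  case 0
  then have k: "k = card A" by simp
  show ?case
    by (rule exI[of _ 1], rule exI[of _ "image_mset (\<lambda>i. - r i) (mset_set A)"])
       (simp add: k sigA_card[OF assms] prod_lin_lp[OF assms])
next
  case (Suc d)
  then have lt: "k < card A" by simp
  have "d = card A - Suc k" using Suc.hyps(2) by simp
  then obtain C M where CM: "C \<noteq> 0" "size M = Suc k" "sigA A r (Suc k) = smult C (lp M)"
    using Suc.hyps(1)[of "Suc k"] lt by auto
  obtain M' where M': "pderiv (smult C (lp M)) = smult (C * of_nat (size M)) (lp M')" "size M' = size M - 1"
    using deriv_split[OF CM(1), of M] CM(2) by auto
  have pd: "pderiv (sigA A r (Suc k)) = smult (of_nat (card A - k)) (sigA A r k)"
    using pderiv_sigA[OF assms] .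
  have pos: "real (card A - k) \<noteq> 0" using lt by simp
  have "sigA A r k = smult (inverse (real (card A - k))) (pderiv (sigA A r (Suc k)))"
    using pd pos by simp
  also have "\<dots> = smult (inverse (real (card A - k)) * (C * of_nat (Suc k))) (lp M')"
    using CM M' by simp
  finally show ?case using M'(2) CM pos by (intro exI[of _ "inverse (real (card A - k)) * (C * of_nat (Suc k))"] exI[of _ M']) simp
qed

lemma mset_root_list:
  assumes "C \<noteq> 0" "is_root_list (smult C (lp M)) xs"
  shows "mset xs = M"
  using assms by (intro multiset_eqI) (simp add: is_root_list_def order_slp)

lemma poly_lp_nz: "a \<notin># M \<Longrightarrow> poly (lp M) a \<noteq> 0"
  using sign_lp[of a M] by auto

lemma lp_replicate: "lp (replicate_mset m c) = [:-c, 1:] ^ m"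
  by (induction m) auto

lemma cnt_list: "cnt (mset xs) a = card {l. l < length xs \<and> a < xs ! l}"
  unfolding cnt_def by (simp add: mset_filter[symmetric] length_filter_conv_card del: mset_filter)

lemma list_il:
  fixes u v :: "real list"
  assumes su: "sorted_wrt (\<ge>) u" and sv: "sorted_wrt (\<ge>) v"
    and lu: "length u = k" and lv: "length v = k - 1"
    and il: "\<And>a. cnt (mset v) a \<le> cnt (mset u) a \<and> cnt (mset u) a \<le> cnt (mset v) a + 1"
  shows "\<forall>j < k - 1. u ! (j + 1) \<le> v ! j \<and> v ! j \<le> u ! j"
proof (intro allI impI conjI)
  fix j assume j: "j < k - 1"
  show "v ! j \<le> u ! j"
  proof (rule ccontr)
    assume "\<not> v ! j \<le> u ! j"
    then have lt: "u ! j < v ! j" by simp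
    define a where "a = u ! j"
    have "{0..j} \<subseteq> {l. l < length v \<and> a < v ! l}"
    proof
      fix l assume "l \<in> {0..j}"
      then have l: "l \<le> j" by simp
      have "v ! j \<le> v ! l"
        using l sorted_wrt_nth_less[OF sv, of l j] j lv by (cases "l = j") auto
      then show "l \<in> {l. l < length v \<and> a < v ! l}" using l j lv lt a_def by auto
    qed
    moreover have "finite {l. l < length v \<and> a < v ! l}" by simp
    ultimately have "card {0..j} \<le> card {l. l < length v \<and> a < v ! l}" by (intro card_mono)
    then have c1: "j + 1 \<le> cnt (mset v) a" unfolding cnt_list by simp
    have "{l. l < length u \<and> a < u ! l} \<subseteq> {0..<j}"
    proof
      fix l assume l: "l \<in> {l. l < length u \<and> a < u ! l}"
      have "\<not> j \<le> l"
      proof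
        assume jl: "j \<le> l"
        have "u ! l \<le> u ! j"
          using jl sorted_wrt_nth_less[OF su, of j l] l by (cases "l = j") auto
        then show False using l a_def by simp
      qed
      then show "l \<in> {0..<j}" by simp
    qed
    then have c2: "cnt (mset u) a \<le> j" unfolding cnt_list
      using card_mono[OF finite_atLeastLessThan[of 0 j]] by fastforce
    show False using il[of a] c1 c2 by simp
  qed
  show "u ! (j + 1) \<le> v ! j"
  proof (rule ccontr)
    assume "\<not> u ! (j + 1) \<le> v ! j"
    then have lt: "v ! j < u ! (j + 1)" by simp
    define a where "a = v ! j"
    have "{0..j+1} \<subseteq> {l. l < length u \<and> a < u ! l}"
    proof
      fix l assume "l \<in> {0..j+1}"
      then have l: "l \<le> j + 1" by simp
      have "u ! (j+1) \<le> u ! l"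
        using l sorted_wrt_nth_less[OF su, of l "j+1"] j lu by (cases "l = j + 1") auto
      then show "l \<in> {l. l < length u \<and> a < u ! l}" using l j lu lt a_def by auto
    qed
    moreover have "finite {l. l < length u \<and> a < u ! l}" by simp
    ultimately have "card {0..j+1} \<le> card {l. l < length u \<and> a < u ! l}" by (intro card_mono)
    then have c1: "j + 2 \<le> cnt (mset u) a" unfolding cnt_list by simp
    have "{l. l < length v \<and> a < v ! l} \<subseteq> {0..<j}"
    proof
      fix l assume l: "l \<in> {l. l < length v \<and> a < v ! l}"
      have "\<not> j \<le> l"
      proof
        assume jl: "j \<le> l"
        have "v ! l \<le> v ! j"
          using jl sorted_wrt_nth_less[OF sv, of j l] l by (cases "l = j") auto
        then show False using l a_def by simp
      qed
      then show "l \<in> {0..<j}" by simp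
    qed
    then have c2: "cnt (mset v) a \<le> j" unfolding cnt_list
      using card_mono[OF finite_atLeastLessThan[of 0 j]] by fastforce
    show False using il[of a] c1 c2 by simp
  qed
qed

lemma cnt_shift:
  assumes "a \<le> a'" "\<And>x. x \<in># X \<Longrightarrow> \<not> (a < x \<and> x \<le> a')"
  shows "cnt X a' = cnt X a"
proof -
  have "filter_mset (\<lambda>x. a' < x) X = filter_mset (\<lambda>x. a < x) X"
    using assms by (intro filter_mset_cong) force+
  then show ?thesis by (simp add: cnt_def)
qed

lemma generic_point:
  fixes S :: "real set"
  assumes "finite S"
  shows "\<exists>a'. a < a' \<and> a' \<notin> S \<and> (\<forall>s\<in>S. \<not> (a < s \<and> s \<le> a'))"
proof (cases "{s\<in>S. a < s} = {}")
  case True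
  then show ?thesis by (intro exI[of _ "a + 1"]) auto
next
  case False
  define m where "m = Min {s\<in>S. a < s}"
  have fin: "finite {s\<in>S. a < s}" using assms by simp
  have mi: "m \<in> {s\<in>S. a < s}" using Min_in[OF fin False] m_def by simp
  have ml: "\<And>s. s \<in> S \<Longrightarrow> a < s \<Longrightarrow> m \<le> s" using Min_le[OF fin] m_def by simp
  show ?thesis
  proof (intro exI[of _ "(a + m) / 2"] conjI ballI)
    show "a < (a + m) / 2" using mi by simp
    show "(a + m) / 2 \<notin> S" using ml[of "(a+m)/2"] mi by force
    fix s assume "s \<in> S" then show "\<not> (a < s \<and> s \<le> (a + m) / 2)" using ml[of s] mi by force
  qed
qed

lemma sign_key:
  fixes y b b' :: real and m :: nat
  assumes m: "m \<ge> 1" and y: "y \<noteq> 0" and b: "b \<noteq> 0"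
  defines "h \<equiv> y ^ m * b" and "h' \<equiv> of_nat m * y ^ (m - 1) * b + y ^ m * b'"
  shows "(y > 0 \<longrightarrow> h' * h < 0 \<longrightarrow> b' * b < 0) \<and> (y < 0 \<longrightarrow> b' * b < 0 \<longrightarrow> h' * h < 0)"
proof -
  define w where "w = y ^ (m - 1) * y ^ (m - 1)"
  have "y ^ (m - 1) \<noteq> 0" using y by simp
  then have w: "w > 0" unfolding w_def by (metis not_real_square_gt_zero)
  have ym: "y ^ m = y ^ (m - 1) * y" using m by (metis Suc_diff_1 less_le_trans zero_less_one power_Suc2)
  have e: "h' * h = w * (y * (of_nat m * b * b + y * (b' * b)))"
    unfolding h_def h'_def w_def ym by (simp add: algebra_simps)
  have "b * b > 0" using b by (metis not_real_square_gt_zero)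
  moreover have "real m > 0" using m by simp
  ultimately have mb: "of_nat m * b * b > 0" by (metis mult.assoc mult_pos_pos)
  show ?thesis
  proof (intro conjI impI)
    assume yp: "y > 0" and hn: "h' * h < 0"
    then have "y * (of_nat m * b * b + y * (b' * b)) < 0" using e w by (simp add: mult_less_0_iff)
    then have "of_nat m * b * b + y * (b' * b) < 0" using yp by (simp add: mult_less_0_iff)
    then have "y * (b' * b) < 0" using mb by linarith
    then show "b' * b < 0" using yp by (simp add: mult_less_0_iff)
  next
    assume yn: "y < 0" and bn: "b' * b < 0"
    then have "y * (b' * b) > 0" by (simp add: mult_neg_neg)
    then have "of_nat m * b * b + y * (b' * b) > 0" using mb by linarith
    then have "y * (of_nat m * b * b + y * (b' * b)) < 0" using yn by (simp add: mult_neg_pos)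
    then show "h' * h < 0" using e w by (simp add: mult_pos_neg)
  qed
qed

lemma cnt_add: "cnt (X + Y) a = cnt X a + cnt Y a"
  by (simp add: cnt_def)

lemma cnt_rep: "cnt (replicate_mset m c) a = (if a < c then m else 0)"
  by (induction m) (auto simp: cnt_def)

lemma il_all:
  fixes U V :: "real multiset"
  assumes fin: "finite S" and sub: "set_mset U \<subseteq> S" "set_mset V \<subseteq> S"
    and gen: "\<And>a. a \<notin> S \<Longrightarrow> cnt V a \<le> cnt U a \<and> cnt U a \<le> cnt V a + 1"
  shows "cnt V a \<le> cnt U a \<and> cnt U a \<le> cnt V a + 1"
proof -
  obtain a' where a': "a < a'" "a' \<notin> S" "\<forall>s\<in>S. \<not> (a < s \<and> s \<le> a')"
    using generic_point[OF fin] by blast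
  have "cnt U a' = cnt U a" using a' sub by (intro cnt_shift) auto
  moreover have "cnt V a' = cnt V a" using a' sub by (intro cnt_shift) auto
  ultimately show ?thesis using gen[OF a'(2)] by simp
qed

theorem lemma2p8:
  fixes n i k :: nat and r :: "nat \<Rightarrow> real" and u v :: "real list"
  assumes "i \<in> {1..n}" and "k \<in> {1..n}"
    and "length u = k" and "sorted_wrt (\<ge>) u" and "is_root_list (sigma_poly n r k) u"
    and "length v = k - 1" and "sorted_wrt (\<ge>) v" and "is_root_list (q_poly n r i k) v"
  shows "\<forall>j < k - 1. u ! (j + 1) \<le> v ! j \<and> v ! j \<le> u ! j"
proof -
  define A where "A = {1..n}"
  define A' where "A' = A - {i}"
  have finA: "finite A" and finA': "finite A'" by (simp_all add: A_def A'_def)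
  have iA: "i \<in> A" using assms(1) by (simp add: A_def)
  have cardA': "card A' = n - 1" using iA by (simp add: A_def A'_def)
  obtain k0 where k: "k = Suc k0" using assms(2) by (cases k) auto
  have kn: "k \<le> n" using assms(2) by simp
  define x where "x = [:r i, 1:]"
  define c where "c = - r i"
  have xc: "x = [:-c, 1:]" by (simp add: x_def c_def)
  define f where "f = sigma_poly n r k"
  define g where "g = q_poly n r i k"
  have f_eq: "f = sigA A' r k + x * g'" if "g' = sigA A' r k0" for g'
    using sigA_remove[OF finA iA, of r k0] that unfolding f_def sigma_sigA A_def A'_def x_def k by simp
  have g_eq: "g = sigA A' r k0"
    unfolding g_def q_poly_def sigma_sigA k using q_eq[OF finA iA, of r k0] by (simp add: A_def A'_def)
  have f_eq2: "f = sigA A' r k + x * g" using f_eq g_eq by simp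
  have fnz: "f \<noteq> 0" using assms(5) by (simp add: is_root_list_def f_def)
  have gnz: "g \<noteq> 0" using assms(8) by (simp add: is_root_list_def g_def)
  have ordu: "count (mset u) y = order y f" for y using assms(5) by (simp add: is_root_list_def f_def)
  have ordv: "count (mset v) y = order y g" for y using assms(8) by (simp add: is_root_list_def g_def)
  have IL: "cnt (mset v) a \<le> cnt (mset u) a \<and> cnt (mset u) a \<le> cnt (mset v) a + 1" for a
  proof (cases "k = n")
    case True
    have "sigA A' r k = 0" using True cardA' finA' kn k by (intro sigA_big) auto
    then have fx: "f = x * g" using f_eq2 by simp
    have "count (mset u) y = count (add_mset c (mset v)) y" for y
    proof -
      have "order y f = order y x + order y g" using fx fnz by (simp add: order_mult)
      then show ?thesis using ordu ordv by (simp add: xc order_lin)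
    qed
    then have "mset u = add_mset c (mset v)" by (rule multiset_eqI)
    then show ?thesis by (simp add: cnt_def)
  next
    case False
    then have kn': "k < n" using kn by simp
    define m where "m = n - k"
    have m1: "m \<ge> 1" using kn' by (simp add: m_def)
    define B where "B = sigA A' r k"
    have kA': "k \<le> card A'" using cardA' kn' by simp
    obtain C MB where CMB: "C \<noteq> 0" "size MB = k" "B = smult C (lp MB)"
      using sigA_split[OF finA' kA', of r] B_def by blast
    have dB: "pderiv B = smult (of_nat m) g"
      unfolding B_def k g_eq using pderiv_sigA[OF finA', of r k0] cardA' k m_def
      by (simp add: Suc_diff_Suc)
    obtain M1 where M1: "pderiv (smult C (lp MB)) = smult (C * of_nat (size MB)) (lp M1)"
      "size M1 = size MB - 1" "\<forall>a. cnt M1 a \<le> cnt MB a \<and> cnt MB a \<le> cnt M1 a + 1"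
      using deriv_split[OF CMB(1), of MB] CMB(2) k by auto
    have mpos: "real m \<noteq> 0" using m1 by simp
    have g1: "g = smult (C * of_nat k / of_nat m) (lp M1)"
    proof -
      have "smult (of_nat m) g = smult (C * of_nat k) (lp M1)" using dB M1(1) CMB by simp
      then have "smult (inverse (of_nat m)) (smult (of_nat m) g) = smult (inverse (of_nat m)) (smult (C * of_nat k) (lp M1))"
        by simp
      then show ?thesis using mpos by (simp add: divide_inverse mult.commute)
    qed
    have Ckm: "C * of_nat k / of_nat m \<noteq> 0" using CMB(1) mpos k by simp
    have vM1: "mset v = M1"
      using mset_root_list[OF Ckm] assms(8) g1 g_def by simp
    define MH where "MH = MB + replicate_mset m c"
    define H where "H = x ^ m * B"
    have HMH: "H = smult C (lp MH)"
      unfolding H_def MH_def CMB(3) lp_union lp_replicate xc by (simp add: algebra_simps)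
    have szMH: "size MH \<ge> 1" using m1 by (simp add: MH_def)
    obtain M2 where M2: "pderiv (smult C (lp MH)) = smult (C * of_nat (size MH)) (lp M2)"
      "\<forall>a. cnt M2 a \<le> cnt MH a \<and> cnt MH a \<le> cnt M2 a + 1"
      using deriv_split[OF CMB(1) szMH] by auto
    have px: "pderiv x = 1" by (simp add: x_def pderiv_pCons)
    have xm: "x ^ m = x ^ (m - 1) * x" using m1
      by (metis Suc_diff_1 less_le_trans zero_less_one power_Suc2)
    have dH: "pderiv H = smult (of_nat m) (x ^ (m - 1)) * B + x ^ m * pderiv B"
      unfolding H_def by (simp add: pderiv_mult pderiv_power px mult.commute)
    have dH2: "pderiv H = smult (of_nat m) (x ^ (m - 1) * f)"
      unfolding dH dB xm f_eq2 B_def[symmetric] by (simp add: algebra_simps smult_add_right)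
    have szpos: "C * of_nat (size MH) \<noteq> 0" using CMB(1) szMH by (simp add: MH_def)
    have uM2: "M2 = mset u + replicate_mset (m - 1) c"
    proof (rule multiset_eqI)
      fix y
      have "count M2 y = order y (pderiv H)" using M2(1) HMH szpos by (simp add: order_slp)
      also have "\<dots> = order y (x ^ (m - 1)) + order y f"
        unfolding dH2 using mpos fnz by (simp add: order_smult, intro order_mult) (simp add: x_def)
      also have "order y (x ^ (m - 1)) = count (replicate_mset (m - 1) c) y"
        using order_lp[of y "replicate_mset (m - 1) c"] by (simp add: lp_replicate xc)
      finally show "count M2 y = count (mset u + replicate_mset (m - 1) c) y" using ordu by simp
    qed
    define S where "S = set_mset MB \<union> set_mset M1 \<union> set_mset M2 \<union> {c}"
    have finS: "finite S" by (simp add: S_def)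
    have gen: "cnt (mset v) a \<le> cnt (mset u) a \<and> cnt (mset u) a \<le> cnt (mset v) a + 1" if aS: "a \<notin> S" for a
    proof -
      define b where "b = poly B a"
      define b' where "b' = poly (pderiv B) a"
      define y where "y = poly x a"
      have y: "y = a - c" by (simp add: y_def x_def c_def)
      have y0: "y \<noteq> 0" using aS y by (auto simp: S_def)
      have b0: "b \<noteq> 0" using aS CMB(1) poly_lp_nz[of a MB] by (auto simp: b_def CMB(3) S_def)
      have b'0: "b' \<noteq> 0" using aS CMB poly_lp_nz[of a M1] M1(1) k by (auto simp: b'_def S_def)
      have Ha: "poly H a = y ^ m * b" by (simp add: H_def y_def b_def)
      have dHa: "poly (pderiv H) a = of_nat m * y ^ (m - 1) * b + y ^ m * b'"
        by (simp add: dH y_def b_def b'_def)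
      have H0: "poly H a \<noteq> 0" using Ha y0 b0 by simp
      have dH0: "poly (pderiv H) a \<noteq> 0"
        using aS szpos poly_lp_nz[of a M2] M2(1) HMH by (auto simp: S_def)
      have cfB: "(b' * b < 0 \<longrightarrow> cnt MB a = cnt M1 a + 1) \<and> (b' * b > 0 \<longrightarrow> cnt MB a = cnt M1 a)"
        using cf[OF CMB(1), of MB M1 a] CMB M1 b0 b'0 k unfolding b_def b'_def by auto
      have cfH: "(poly (pderiv H) a * poly H a < 0 \<longrightarrow> cnt MH a = cnt M2 a + 1)
          \<and> (poly (pderiv H) a * poly H a > 0 \<longrightarrow> cnt MH a = cnt M2 a)"
        using cf[OF CMB(1) szMH M2(1), of a] M2(2) H0 dH0 HMH by auto
      have key: "(y > 0 \<longrightarrow> poly (pderiv H) a * poly H a < 0 \<longrightarrow> b' * b < 0)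
          \<and> (y < 0 \<longrightarrow> b' * b < 0 \<longrightarrow> poly (pderiv H) a * poly H a < 0)"
        unfolding Ha dHa using sign_key[OF m1 y0 b0, of b'] by simp
      have bb: "b' * b \<noteq> 0" using b0 b'0 by simp
      have hh: "poly (pderiv H) a * poly H a \<noteq> 0" using H0 dH0 by simp
      have cH: "cnt MH a = cnt MB a + (if a < c then m else 0)"
        by (simp add: MH_def cnt_add cnt_rep)
      have c2: "cnt M2 a = cnt (mset u) a + (if a < c then m - 1 else 0)"
        by (simp add: uM2 cnt_add cnt_rep)
      have cv: "cnt (mset v) a = cnt M1 a" by (simp add: vM1)
      define hp where "hp = poly (pderiv H) a * poly H a"
      have cfB1: "b' * b < 0 \<Longrightarrow> cnt MB a = cnt M1 a + 1" using cfB by blast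
      have cfB2: "b' * b > 0 \<Longrightarrow> cnt MB a = cnt M1 a" using cfB by blast
      have cfH1: "hp < 0 \<Longrightarrow> cnt MH a = cnt M2 a + 1" using cfH hp_def by blast
      have cfH2: "hp > 0 \<Longrightarrow> cnt MH a = cnt M2 a" using cfH hp_def by blast
      have bc: "b' * b < 0 \<or> b' * b > 0" using bb by linarith
      have hc: "hp < 0 \<or> hp > 0" using hh hp_def by linarith
      show ?thesis
      proof (cases "a < c")
        case True
        then have yn: "y < 0" using y by simp
        have k1: "b' * b < 0 \<Longrightarrow> hp < 0" using key yn hp_def by blast
        have e1: "cnt MH a = cnt MB a + m" using cH True by simp
        have e2: "cnt M2 a = cnt (mset u) a + (m - 1)" using c2 True by simp
        from bc show ?thesis
        proof
          assume "b' * b < 0"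
          then show ?thesis using cfB1 k1 cfH1 e1 e2 cv m1 by simp
        next
          assume bp: "b' * b > 0"
          from hc show ?thesis
          proof
            assume "hp < 0" then show ?thesis using cfB2[OF bp] cfH1 e1 e2 cv m1 by simp
          next
            assume "hp > 0" then show ?thesis using cfB2[OF bp] cfH2 e1 e2 cv m1 by (simp; linarith)
          qed
        qed
      next
        case False
        then have yp: "y > 0" using y y0 by simp
        have k1: "hp < 0 \<Longrightarrow> b' * b < 0" using key yp hp_def by blast
        have e1: "cnt MH a = cnt MB a" using cH False by simp
        have e2: "cnt M2 a = cnt (mset u) a" using c2 False by simp
        from hc show ?thesis
        proof
          assume "hp < 0"
          then show ?thesis using cfB1 k1 cfH1 e1 e2 cv by simp
        next
          assume hpp: "hp > 0"
          from bc show ?thesis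
          proof
            assume "b' * b < 0" then show ?thesis using cfB1 cfH2[OF hpp] e1 e2 cv by simp
          next
            assume "b' * b > 0" then show ?thesis using cfB2 cfH2[OF hpp] e1 e2 cv by simp
          qed
        qed
      qed
    qed
    have "set_mset (mset u) \<subseteq> S" unfolding S_def using uM2 by auto
    moreover have "set_mset (mset v) \<subseteq> S" unfolding S_def using vM1 by auto
    ultimately show ?thesis using il_all[OF finS _ _ gen] by blast
  qed
  show ?thesis using list_il[OF assms(4) assms(7) assms(3) assms(6) IL] .
qed

end
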